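(* Let $n\ge 4$. The number of semimagic quad squares using the EvenQuads-$2^n$ deck equals $2^n(2^n-1)(2^n-2)(2^n-4)(2^n-8)$ times the number of semimagic quad squares of type C in that deck. The same holds with "semimagic" replaced by "magic", and with "semimagic" replaced by "strongly magic".
   Context: The EvenQuads-$2^n$ deck consists of $2^n$ cards identified with the integers $0,1,\dots,2^n-1$ (equivalently, via binary expansion, with the vectors of $\mathbb{Z}_2^n$). Four cards $a,b,c,d$ form a quad if and only if $a\oplus b\oplus c\oplus d=0$, where $\oplus$ denotes bitwise XOR. A quad square is a $4\times 4$ array of $16$ pairwise distinct cards of the deck. It is semimagic if each of its four rows and each of its four columns forms a quad; it is magic if, in addition, each of its two diagonals forms a quad. Index rows and columns by $0,1,2,3$; a quad square is strongly magic if for any four distinct positions $(i_1,j_1),\dots,(i_4,j_4)$ with $i_1\oplus i_2\oplus i_3\oplus i_4=0$ and $j_1\oplus j_2\oplus j_3\oplus j_4=0$, the four cards in these positions form a quad. A quad square is of type C if its first row is $0,1,2,3$ (left to right) and its first column is $0,4,8,12$ (top to bottom). *)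

theory Defs
  imports Main "HOL-Library.FuncSet"
begin

definition deck :: "nat \<Rightarrow> nat set" where
  "deck n = {0..<2^n}"

definition is_quad :: "nat \<Rightarrow> nat \<Rightarrow> nat \<Rightarrow> nat \<Rightarrow> bool" where
  "is_quad a b c d \<longleftrightarrow> xor (xor (xor a b) c) d = 0"

text \<open>Positions of a 4x4 array: (row, column) with indices 0..3.\<close>

definition positions :: "(nat \<times> nat) set" where
  "positions = {0..<4} \<times> {0..<4}"

definition quad_square :: "nat \<Rightarrow> (nat \<times> nat \<Rightarrow> nat) \<Rightarrow> bool" where
  "quad_square n Q \<longleftrightarrow> Q \<in> positions \<rightarrow>\<^sub>E deck n \<and> inj_on Q positions"

definition semimagic :: "(nat \<times> nat \<Rightarrow> nat) \<Rightarrow> bool" where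
  "semimagic Q \<longleftrightarrow>
     (\<forall>i<4. is_quad (Q (i,0)) (Q (i,1)) (Q (i,2)) (Q (i,3))) \<and>
     (\<forall>j<4. is_quad (Q (0,j)) (Q (1,j)) (Q (2,j)) (Q (3,j)))"

definition magic :: "(nat \<times> nat \<Rightarrow> nat) \<Rightarrow> bool" where
  "magic Q \<longleftrightarrow> semimagic Q \<and>
     is_quad (Q (0,0)) (Q (1,1)) (Q (2,2)) (Q (3,3)) \<and>
     is_quad (Q (0,3)) (Q (1,2)) (Q (2,1)) (Q (3,0))"

definition strongly_magic :: "(nat \<times> nat \<Rightarrow> nat) \<Rightarrow> bool" where
  "strongly_magic Q \<longleftrightarrow>
     (\<forall>p1\<in>positions. \<forall>p2\<in>positions. \<forall>p3\<in>positions. \<forall>p4\<in>positions.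
        distinct [p1, p2, p3, p4] \<and>
        xor (xor (xor (fst p1) (fst p2)) (fst p3)) (fst p4) = 0 \<and>
        xor (xor (xor (snd p1) (snd p2)) (snd p3)) (snd p4) = 0
        \<longrightarrow> is_quad (Q p1) (Q p2) (Q p3) (Q p4))"

definition type_C :: "(nat \<times> nat \<Rightarrow> nat) \<Rightarrow> bool" where
  "type_C Q \<longleftrightarrow> (\<forall>j<4. Q (0,j) = j) \<and> (\<forall>i<4. Q (i,0) = 4 * i)"

end

theory Submission
  imports Defs
begin


lemma xor_cancel1[simp]: "xor (x::nat) (xor x y) = y"
  by (simp flip: xor.assoc)
lemma xor_eq_iff: "((x::nat) = y) = (xor x y = 0)"
  by (metis xor.comm_neutral xor_cancel1 xor_self_eq)

lemma xor_lt: "(x::nat) < 2^n \<Longrightarrow> y < 2^n \<Longrightarrow> xor x y < 2^n"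
  by (metis take_bit_nat_eq_self_iff take_bit_xor)

fun comb :: "(nat \<Rightarrow> nat) \<Rightarrow> nat \<Rightarrow> nat \<Rightarrow> nat" where
  "comb w 0 z = 0"
| "comb w (Suc k) z = xor (if bit z k then w k else 0) (comb w k z)"

lemma comb_lin: "comb w k (xor z z') = xor (comb w k z) (comb w k z')"
  by (induction k) (auto simp: bit_xor_iff ac_simps)

lemma comb_0[simp]: "comb w k 0 = 0"
  by (induction k) auto

lemma comb_upd: "i \<ge> k \<Longrightarrow> comb (w(i:=t)) k z = comb w k z"
  by (induction k) auto

lemma comb_bits: "(\<And>i. i < k \<Longrightarrow> bit z i = bit z' i) \<Longrightarrow> comb w k z = comb w k z'"
  by (induction k) auto

lemma comb_mod: "comb w k (z mod 2^k) = comb w k z"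
  by (rule comb_bits) (simp add: bit_simps flip: take_bit_eq_mod)

lemma comb_bound: "(\<And>i. i < k \<Longrightarrow> w i < 2^n) \<Longrightarrow> comb w k z < 2^n"
  by (induction k) (auto intro!: xor_lt)

lemma comb_exp: "comb w k (2^i) = (if i < k then w i else 0)"
  by (induction k) (auto simp: bit_exp_iff less_Suc_eq)

definition indep :: "(nat \<Rightarrow> nat) \<Rightarrow> nat \<Rightarrow> bool" where
  "indep w k \<longleftrightarrow> (\<forall>z<2^k. comb w k z = 0 \<longrightarrow> z = 0)"

lemma xor_lt2: "(x::nat) < 2^n \<Longrightarrow> y < 2^n \<Longrightarrow> xor x y < 2^n" by (rule xor_lt)

lemma indep_inj: "indep w k \<Longrightarrow> inj_on (comb w k) {0..<2^k}"
  unfolding indep_def inj_on_def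
  by (metis atLeastLessThan_iff comb_lin xor_eq_iff xor_lt)

lemma lt_not_bit: "(z::nat) < 2^k \<Longrightarrow> \<not> bit z k"
  by (simp add: bit_iff_odd)

lemma indep_Suc: "indep (w(k:=t)) (Suc k) \<longleftrightarrow> indep w k \<and> t \<notin> comb w k ` {0..<2^k}"
proof
  assume H: "indep (w(k:=t)) (Suc k)"
  have c: "comb (w(k:=t)) (Suc k) z = xor (if bit z k then t else 0) (comb w k z)" for z
    by (simp add: comb_upd)
  show "indep w k \<and> t \<notin> comb w k ` {0..<2^k}"
  proof
    show "indep w k" unfolding indep_def
    proof (intro allI impI)
      fix z :: nat assume "z < 2^k" "comb w k z = 0"
      then show "z = 0" using H[unfolded indep_def, rule_format, of z] c[of z] lt_not_bit[of z k]
        by simp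
    qed
    show "t \<notin> comb w k ` {0..<2^k}"
    proof
      assume "t \<in> comb w k ` {0..<2^k}"
      then obtain z where z: "z < 2^k" "t = comb w k z" by auto
      let ?z = "z + 2^k"
      have b: "bit ?z k" using z by (simp add: bit_iff_odd div_add_self2 div_less)
      have m: "comb w k ?z = comb w k z" by (metis comb_mod mod_add_self2)
      have "?z < 2^Suc k" using z by simp
      then have "?z = 0" using H[unfolded indep_def, rule_format, of ?z] c[of ?z] b m z by simp
      then show False by simp
    qed
  qed
next
  assume H: "indep w k \<and> t \<notin> comb w k ` {0..<2^k}"
  show "indep (w(k:=t)) (Suc k)" unfolding indep_def
  proof (intro allI impI)
    fix z :: nat assume z: "z < 2^Suc k" "comb (w(k := t)) (Suc k) z = 0"
    then have e: "xor (if bit z k then t else 0) (comb w k z) = 0" using z(2) by (cases "bit z k") (simp_all add: comb_upd)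
    show "z = 0"
    proof (cases "bit z k")
      case True
      then have "t = comb w k z" using e xor_eq_iff[of t "comb w k z"] by simp
      then have "t = comb w k (z mod 2^k)" by (simp add: comb_mod)
      then show ?thesis using H by auto
    next
      case False
      have "z < 2^k"
      proof (rule ccontr)
        assume "\<not> z < 2^k"
        have "z div 2^k < 2" using z(1) by (simp add: less_mult_imp_div_less mult.commute)
        moreover have "2^k div 2^k \<le> z div 2^k" using \<open>\<not> z < 2^k\<close> div_le_mono[of "2^k" z "2^k"] by linarith
        ultimately have "z div 2^k = 1" by simp
        then show False using False by (simp add: bit_iff_odd)
      qed
      then show ?thesis using e False H by (simp add: indep_def)
    qed
  qed
qed

definition IT :: "nat \<Rightarrow> nat \<Rightarrow> (nat \<Rightarrow> nat) set" where
  "IT n k = {w \<in> {0..<k} \<rightarrow>\<^sub>E {0..<2^n}. indep w k}"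

lemma card_img: "indep w k \<Longrightarrow> card (comb w k ` {0..<2^k}) = 2^k"
  by (simp add: card_image indep_inj)

lemma img_sub: "w \<in> {0..<k} \<rightarrow>\<^sub>E {0..<2^n} \<Longrightarrow> comb w k ` {0..<2^k} \<subseteq> {0..<2^n}"
  by (auto intro!: comb_bound simp: PiE_iff)

lemma IT_Suc: "IT n (Suc k) = (\<lambda>(w,t). w(k:=t)) ` (SIGMA w:IT n k. {0..<2^n} - comb w k ` {0..<2^k})"
proof (rule set_eqI)
  fix v
  show "v \<in> IT n (Suc k) \<longleftrightarrow> v \<in> (\<lambda>(w,t). w(k:=t)) ` (SIGMA w:IT n k. {0..<2^n} - comb w k ` {0..<2^k})"
  proof
    assume v: "v \<in> IT n (Suc k)"
    let ?w = "v(k:=undefined)"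
    have vv: "v = ?w(k := v k)" by simp
    have "indep ?w k \<and> v k \<notin> comb ?w k ` {0..<2^k}"
      using v vv unfolding IT_def by (metis (mono_tags, lifting) indep_Suc mem_Collect_eq)
    moreover have "?w \<in> {0..<k} \<rightarrow>\<^sub>E {0..<2^n}" "v k < 2^n"
      using v unfolding IT_def by (auto simp: PiE_iff extensional_def)
    ultimately show "v \<in> (\<lambda>(w,t). w(k:=t)) ` (SIGMA w:IT n k. {0..<2^n} - comb w k ` {0..<2^k})"
      unfolding IT_def by (intro image_eqI[of _ _ "(?w, v k)"]) auto
  next
    assume "v \<in> (\<lambda>(w,t). w(k:=t)) ` (SIGMA w:IT n k. {0..<2^n} - comb w k ` {0..<2^k})"
    then obtain w t where wt: "w \<in> IT n k" "t < 2^n" "t \<notin> comb w k ` {0..<2^k}" "v = w(k:=t)" by auto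
    then show "v \<in> IT n (Suc k)" unfolding IT_def using indep_Suc[of w k t]
      by (auto simp: PiE_iff extensional_def)
  qed
qed

lemma inj_upd: "inj_on (\<lambda>(w,t). w(k:=t)) (SIGMA w:IT n k. {0..<2^n} - comb w k ` {0..<2^k})"
proof (rule inj_onI, clarsimp)
  fix w t w' t'
  assume a: "w \<in> IT n k" "w' \<in> IT n k" "w(k := t) = w'(k := t')"
  then have "t = t'" by (metis fun_upd_same)
  moreover have "w = w'"
  proof
    fix i show "w i = w' i"
    proof (cases "i = k")
      case True then show ?thesis using a unfolding IT_def by (auto simp: PiE_iff extensional_def)
    next
      case False then show ?thesis using a(3) by (metis fun_upd_other)
    qed
  qed
  ultimately show "w = w' \<and> t = t'" by simp
qed

lemma card_IT: "k \<le> n \<Longrightarrow> card (IT n k) = (\<Prod>i<k. 2^n - 2^i)"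
proof (induction k)
  case 0
  have "IT n 0 = {\<lambda>_. undefined}" unfolding IT_def indep_def by auto
  then show ?case by simp
next
  case (Suc k)
  have fin: "finite (IT n k)" unfolding IT_def by (rule finite_subset[OF _ finite_PiE[of "{0..<k}" "\<lambda>_. {0..<2^n}"]]) auto
  have "card (IT n (Suc k)) = card (SIGMA w:IT n k. {0..<2^n} - comb w k ` {0..<2^k})"
    unfolding IT_Suc by (rule card_image[OF inj_upd])
  also have "\<dots> = (\<Sum>w\<in>IT n k. card ({0..<2^n} - comb w k ` {0..<2^k}))"
    using fin by (simp add: card_SigmaI)
  also have "\<dots> = (\<Sum>w\<in>IT n k. 2^n - 2^k)"
  proof (rule sum.cong[OF refl])
    fix w assume "w \<in> IT n k"
    then show "card ({0..<2^n} - comb w k ` {0..<2^k}) = 2^n - 2^k"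
      unfolding IT_def by (simp add: card_Diff_subset img_sub card_img)
  qed
  also have "\<dots> = card (IT n k) * (2^n - 2^k)" by simp
  finally show ?case using Suc by simp
qed

lemma extend_IT: assumes "w \<in> IT n k" "k < n" shows "\<exists>t. w(k:=t) \<in> IT n (Suc k)"
proof -
  have "card ({0..<2^n} - comb w k ` {0..<2^k}) = 2^n - 2^k"
    using assms(1) unfolding IT_def by (simp add: card_Diff_subset img_sub card_img)
  moreover have "(2::nat)^k < 2^n" using assms(2) by simp
  ultimately have "{0..<2^n} - comb w k ` {0..<2^k} \<noteq> {}" by (metis card.empty zero_less_diff less_irrefl)
  then obtain t where "t \<in> {0..<2^n} - comb w k ` {0..<2^k}" by blast
  then show ?thesis using assms(1) unfolding IT_Suc by (intro exI[of _ t] image_eqI[of _ _ "(w,t)"]) auto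
qed

lemma extend_IT_to: assumes "w \<in> IT n k" "k \<le> m" "m \<le> n" shows "\<exists>w'\<in>IT n m. \<forall>i<k. w' i = w i"
  using assms(2,3)
proof (induction m rule: dec_induct)
  case base then show ?case using assms(1) by auto
next
  case (step m)
  then obtain w' where w': "w' \<in> IT n m" "\<forall>i<k. w' i = w i" by auto
  obtain t where "w'(m:=t) \<in> IT n (Suc m)" using extend_IT[OF w'(1)] step by auto
  then show ?case using w'(2) step by (intro bexI[of _ "w'(m:=t)"]) auto
qed

lemma exists_L:
  assumes "w \<in> IT n 4" "4 \<le> n"
  shows "\<exists>L. bij_betw L (deck n) (deck n) \<and> (\<forall>x y. L (xor x y) = xor (L x) (L y))
     \<and> L 1 = w 0 \<and> L 2 = w 1 \<and> L 4 = w 2 \<and> L 8 = w 3"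
proof -
  obtain w' where w': "w' \<in> IT n n" "\<forall>i<4. w' i = w i" using extend_IT_to[OF assms(1) assms(2) order_refl] by auto
  let ?L = "comb w' n"
  have ind: "indep w' n" and bd: "\<And>i. i < n \<Longrightarrow> w' i < 2^n" using w'(1) unfolding IT_def by (auto simp: PiE_iff)
  have inj: "inj_on ?L (deck n)" using indep_inj[OF ind] by (simp add: deck_def)
  have sub: "?L ` deck n \<subseteq> deck n" using comb_bound[OF bd] by (auto simp: deck_def)
  have "?L ` deck n = deck n" by (rule endo_inj_surj[OF _ sub inj]) (simp add: deck_def)
  then have "bij_betw ?L (deck n) (deck n)" using inj by (simp add: bij_betw_def)
  moreover have "?L (2^i) = w i" if "i < 4" for i using that assms(2) w'(2) by (simp add: comb_exp)
  note this[of 0] this[of 1] this[of 2] this[of 3]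
  ultimately show ?thesis by (intro exI[of _ ?L]) (simp add: comb_lin)
qed




lemma pos_iff[simp]: "(i,j) \<in> positions \<longleftrightarrow> i < 4 \<and> j < 4"
  by (simp add: positions_def)

lemma all_lt4: "(\<forall>i<(4::nat). P i) = (P 0 \<and> P 1 \<and> P 2 \<and> P 3)"
  by (auto simp: less_Suc_eq numeral_eq_Suc)

definition quadiff :: "nat \<Rightarrow> (nat \<Rightarrow> nat) \<Rightarrow> bool" where
  "quadiff n g \<longleftrightarrow> (\<forall>p\<in>deck n. \<forall>q\<in>deck n. \<forall>r\<in>deck n. \<forall>s\<in>deck n.
      is_quad (g p) (g q) (g r) (g s) = is_quad p q r s)"

lemma qd: "quadiff n g \<Longrightarrow> p\<in>deck n \<Longrightarrow> q\<in>deck n \<Longrightarrow> r\<in>deck n \<Longrightarrow> s\<in>deck n \<Longrightarrow>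
      is_quad (g p) (g q) (g r) (g s) = is_quad p q r s"
  by (simp add: quadiff_def)

lemma inv_semimagic:
  assumes "quadiff n g" "\<forall>p\<in>positions. Q p \<in> deck n" "\<forall>p\<in>positions. Q' p = g (Q p)"
  shows "semimagic Q' = semimagic Q"
proof -
  have e: "Q' (i,j) = g (Q (i,j))" if "i < 4" "j < 4" for i j using assms(3) that by auto
  have d: "Q (i,j) \<in> deck n" if "i < 4" "j < 4" for i j using assms(2) that by auto
  show ?thesis unfolding semimagic_def all_lt4 by (simp add: e d qd[OF assms(1)])
qed

lemma inv_magic:
  assumes "quadiff n g" "\<forall>p\<in>positions. Q p \<in> deck n" "\<forall>p\<in>positions. Q' p = g (Q p)"
  shows "magic Q' = magic Q"
proof -
  have e: "Q' (i,j) = g (Q (i,j))" if "i < 4" "j < 4" for i j using assms(3) that by auto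
  have d: "Q (i,j) \<in> deck n" if "i < 4" "j < 4" for i j using assms(2) that by auto
  show ?thesis unfolding magic_def inv_semimagic[OF assms] by (simp add: e d qd[OF assms(1)])
qed

lemma inv_strongly:
  assumes "quadiff n g" "\<forall>p\<in>positions. Q p \<in> deck n" "\<forall>p\<in>positions. Q' p = g (Q p)"
  shows "strongly_magic Q' = strongly_magic Q"
  unfolding strongly_magic_def using assms by (simp add: qd[OF assms(1)])

lemma sm_semimagic: "strongly_magic Q \<Longrightarrow> semimagic Q"
  unfolding strongly_magic_def semimagic_def
  apply (intro conjI allI impI)
  subgoal for i
    apply (drule bspec[of _ _ "(i,0)"], simp)
    apply (drule bspec[of _ _ "(i,1)"], simp)
    apply (drule bspec[of _ _ "(i,2)"], simp)
    apply (drule bspec[of _ _ "(i,3)"], simp)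
    by simp
  subgoal for j
    apply (drule bspec[of _ _ "(0,j)"], simp)
    apply (drule bspec[of _ _ "(1,j)"], simp)
    apply (drule bspec[of _ _ "(2,j)"], simp)
    apply (drule bspec[of _ _ "(3,j)"], simp)
    by simp
  done

lemma test: "xor (1::nat) 2 = 3" "xor (xor (0::nat) 4) 8 = 12" by simp_all

lemma comb4: "comb w 4 z = xor (if bit z 3 then w 3 else 0) (xor (if bit z 2 then w 2 else 0)
   (xor (if bit z 1 then w 1 else 0) (if bit z 0 then w 0 else 0)))"
proof -
  have "(4::nat) = Suc (Suc (Suc (Suc 0)))" by simp
  then show ?thesis by (simp only:) (simp add: numeral_3_eq_3 numeral_2_eq_2)
qed

lemma test2: "comb w 4 13 = xor (w 3) (xor (w 2) (w 0))"
  by (simp add: comb4 bit_0)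


lemma lt16: "(z::nat) < 16 \<Longrightarrow> z = 0 \<or> z = 1 \<or> z = 2 \<or> z = 3 \<or> z = 4 \<or> z = 5 \<or> z = 6 \<or> z = 7 \<or>
   z = 8 \<or> z = 9 \<or> z = 10 \<or> z = 11 \<or> z = 12 \<or> z = 13 \<or> z = 14 \<or> z = 15"
  by presburger

lemma quad_last: "is_quad a b c d \<Longrightarrow> d = xor (xor a b) c"
  unfolding is_quad_def using xor_eq_iff by metis

lemma neq_xor: "(x::nat) \<noteq> y \<Longrightarrow> xor x y \<noteq> 0"
  using xor_eq_iff by metis

lemma frame_IT:
  assumes Q: "Q \<in> positions \<rightarrow>\<^sub>E deck n" "inj_on Q positions" "semimagic Q"
  shows "(\<lambda>i\<in>{0..<4}. xor (Q(0,0)) ([Q(0,1),Q(0,2),Q(1,0),Q(2,0)] ! i)) \<in> IT n 4"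
proof -
  define a b c e f where "a = Q(0,0)" "b = Q(0,1)" "c = Q(0,2)" "e = Q(1,0)" "f = Q(2,0)"
  have d03: "Q(0,3) = xor (xor a b) c" using Q(3) unfolding semimagic_def a_b_c_e_f_def
    by (auto intro: quad_last)
  have d30: "Q(3,0) = xor (xor a e) f" using Q(3) unfolding semimagic_def a_b_c_e_f_def
    by (auto intro: quad_last)
  have ne: "Q p \<noteq> Q q" if "p \<in> positions" "q \<in> positions" "p \<noteq> q" for p q
    using Q(2) that by (meson inj_onD)
  have deck: "Q p < 2^n" if "p \<in> positions" for p using Q(1) that by (auto simp: PiE_iff deck_def)
  have N1: "xor a b \<noteq> 0" using ne[of "(0,0)" "(0,1)"] d03 d30 unfolding a_b_c_e_f_def by (intro neq_xor) simp
  have N2: "xor a c \<noteq> 0" using ne[of "(0,0)" "(0,2)"] d03 d30 unfolding a_b_c_e_f_def by (intro neq_xor) simp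
  have N3: "xor a (xor (xor a b) c) \<noteq> 0" using ne[of "(0,0)" "(0,3)"] d03 d30 unfolding a_b_c_e_f_def by (intro neq_xor) simp
  have N4: "xor a e \<noteq> 0" using ne[of "(0,0)" "(1,0)"] d03 d30 unfolding a_b_c_e_f_def by (intro neq_xor) simp
  have N5: "xor a f \<noteq> 0" using ne[of "(0,0)" "(2,0)"] d03 d30 unfolding a_b_c_e_f_def by (intro neq_xor) simp
  have N6: "xor a (xor (xor a e) f) \<noteq> 0" using ne[of "(0,0)" "(3,0)"] d03 d30 unfolding a_b_c_e_f_def by (intro neq_xor) simp
  have N7: "xor b c \<noteq> 0" using ne[of "(0,1)" "(0,2)"] d03 d30 unfolding a_b_c_e_f_def by (intro neq_xor) simp
  have N8: "xor b (xor (xor a b) c) \<noteq> 0" using ne[of "(0,1)" "(0,3)"] d03 d30 unfolding a_b_c_e_f_def by (intro neq_xor) simp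
  have N9: "xor b e \<noteq> 0" using ne[of "(0,1)" "(1,0)"] d03 d30 unfolding a_b_c_e_f_def by (intro neq_xor) simp
  have N10: "xor b f \<noteq> 0" using ne[of "(0,1)" "(2,0)"] d03 d30 unfolding a_b_c_e_f_def by (intro neq_xor) simp
  have N11: "xor b (xor (xor a e) f) \<noteq> 0" using ne[of "(0,1)" "(3,0)"] d03 d30 unfolding a_b_c_e_f_def by (intro neq_xor) simp
  have N12: "xor c (xor (xor a b) c) \<noteq> 0" using ne[of "(0,2)" "(0,3)"] d03 d30 unfolding a_b_c_e_f_def by (intro neq_xor) simp
  have N13: "xor c e \<noteq> 0" using ne[of "(0,2)" "(1,0)"] d03 d30 unfolding a_b_c_e_f_def by (intro neq_xor) simp
  have N14: "xor c f \<noteq> 0" using ne[of "(0,2)" "(2,0)"] d03 d30 unfolding a_b_c_e_f_def by (intro neq_xor) simp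
  have N15: "xor c (xor (xor a e) f) \<noteq> 0" using ne[of "(0,2)" "(3,0)"] d03 d30 unfolding a_b_c_e_f_def by (intro neq_xor) simp
  have N16: "xor (xor (xor a b) c) e \<noteq> 0" using ne[of "(0,3)" "(1,0)"] d03 d30 unfolding a_b_c_e_f_def by (intro neq_xor) simp
  have N17: "xor (xor (xor a b) c) f \<noteq> 0" using ne[of "(0,3)" "(2,0)"] d03 d30 unfolding a_b_c_e_f_def by (intro neq_xor) simp
  have N18: "xor (xor (xor a b) c) (xor (xor a e) f) \<noteq> 0" using ne[of "(0,3)" "(3,0)"] d03 d30 unfolding a_b_c_e_f_def by (intro neq_xor) simp
  have N19: "xor e f \<noteq> 0" using ne[of "(1,0)" "(2,0)"] d03 d30 unfolding a_b_c_e_f_def by (intro neq_xor) simp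
  have N20: "xor e (xor (xor a e) f) \<noteq> 0" using ne[of "(1,0)" "(3,0)"] d03 d30 unfolding a_b_c_e_f_def by (intro neq_xor) simp
  have N21: "xor f (xor (xor a e) f) \<noteq> 0" using ne[of "(2,0)" "(3,0)"] d03 d30 unfolding a_b_c_e_f_def by (intro neq_xor) simp
  note N' = N1 N2 N3 N4 N5 N6 N7 N8 N9 N10 N11 N12 N13 N14 N15 N16 N17 N18 N19 N20 N21
  note N'' = N'[simplified xor.assoc xor.commute xor.left_commute xor_cancel1 xor_self_eq xor.comm_neutral, unfolded neq0_conv[symmetric]]
  let ?w = "(\<lambda>i\<in>{0..<4}. xor (Q(0,0)) ([Q(0,1),Q(0,2),Q(1,0),Q(2,0)] ! i))"
  have w0: "?w 0 = xor a b" "?w 1 = xor a c" "?w 2 = xor a e" "?w 3 = xor a f"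
    by (simp_all add: a_b_c_e_f_def)
  have "indep ?w 4" unfolding indep_def
  proof (intro allI impI)
    fix z :: nat assume z: "z < 2^4" "comb ?w 4 z = 0"
    then have "z < 16" by simp
    then have "z = 0 \<or> z = 1 \<or> z = 2 \<or> z = 3 \<or> z = 4 \<or> z = 5 \<or> z = 6 \<or> z = 7 \<or>
   z = 8 \<or> z = 9 \<or> z = 10 \<or> z = 11 \<or> z = 12 \<or> z = 13 \<or> z = 14 \<or> z = 15" by (rule lt16)
    then show "z = 0" using z(2) unfolding comb4 w0
      apply (elim disjE)
      by (simp_all add: comb4 bit_0 w0 N'' xor.assoc xor.commute xor.left_commute)
  qed
  moreover have "?w \<in> {0..<4} \<rightarrow>\<^sub>E {0..<2^n}"
  proof -
    have "\<forall>i<4. ?w i < 2^n" unfolding all_lt4 w0 unfolding a_b_c_e_f_def by (simp add: xor_lt deck)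
    then show ?thesis by (auto simp: PiE_iff)
  qed
  ultimately show ?thesis by (simp add: IT_def)
qed


definition fib :: "nat \<Rightarrow> ((nat \<times> nat \<Rightarrow> nat) \<Rightarrow> bool) \<Rightarrow> nat \<Rightarrow> (nat \<Rightarrow> nat) \<Rightarrow> (nat \<times> nat \<Rightarrow> nat) set" where
  "fib n P a w = {Q. quad_square n Q \<and> P Q \<and> Q(0,0) = a \<and> Q(0,1) = xor a (w 0) \<and>
     Q(0,2) = xor a (w 1) \<and> Q(1,0) = xor a (w 2) \<and> Q(2,0) = xor a (w 3)}"

definition w0 :: "nat \<Rightarrow> nat" where "w0 = (\<lambda>i\<in>{0..<4}. 2^i)"

lemma w0_simps[simp]: "w0 0 = 1" "w0 1 = 2" "w0 2 = 4" "w0 3 = 8" "w0 (Suc 0) = 2" by (simp_all add: w0_def)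

lemma fib_transport:
  assumes A2: "\<And>g Q Q'. quadiff n g \<Longrightarrow> \<forall>p\<in>positions. Q p \<in> deck n \<Longrightarrow> \<forall>p\<in>positions. Q' p = g (Q p) \<Longrightarrow> P Q' = P Q"
    and bij: "bij_betw g (deck n) (deck n)" and qg: "quadiff n g"
    and dk: "0 \<in> deck n" "1 \<in> deck n" "2 \<in> deck n" "4 \<in> deck n" "8 \<in> deck n"
    and gv: "g 0 = a" "g 1 = xor a (w 0)" "g 2 = xor a (w 1)" "g 4 = xor a (w 2)" "g 8 = xor a (w 3)"
  shows "card (fib n P 0 w0) = card (fib n P a w)"
proof -
  define h where "h = inv_into (deck n) g"
  have inj: "inj_on g (deck n)" using bij by (rule bij_betw_imp_inj_on)
  have hg: "h (g x) = x" if "x \<in> deck n" for x unfolding h_def using inj that by (rule inv_into_f_f)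
  have gh: "g (h y) = y" if "y \<in> deck n" for y unfolding h_def
    using that bij_betw_imp_surj_on[OF bij] by (metis f_inv_into_f)
  have gd: "g x \<in> deck n" if "x \<in> deck n" for x using bij that by (meson bij_betwE)
  have hd: "h y \<in> deck n" if "y \<in> deck n" for y using bij_betw_inv_into[OF bij] that unfolding h_def by (meson bij_betwE)
  define F where "F = (\<lambda>Q. restrict (g \<circ> Q) positions)"
  define F' where "F' = (\<lambda>Q. restrict (h \<circ> Q) positions)"
  have inQ: "Q p \<in> deck n" if "quad_square n Q" "p \<in> positions" for Q p
    using that by (auto simp: quad_square_def PiE_iff)
  have outQ: "Q p = undefined" if "quad_square n Q" "p \<notin> positions" for Q p
    using that unfolding quad_square_def by (meson PiE_arb)
  have "bij_betw F (fib n P 0 w0) (fib n P a w)"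
  proof (rule bij_betw_byWitness[where f' = F'])
    show "\<forall>Q\<in>fib n P 0 w0. F' (F Q) = Q"
    proof
      fix Q assume "Q \<in> fib n P 0 w0"
      then have q: "quad_square n Q" by (simp add: fib_def)
      show "F' (F Q) = Q"
      proof
        fix p show "F' (F Q) p = Q p"
          by (cases "p \<in> positions") (simp_all add: F_def F'_def hg inQ[OF q] outQ[OF q])
      qed
    qed
    show "\<forall>Q\<in>fib n P a w. F (F' Q) = Q"
    proof
      fix Q assume "Q \<in> fib n P a w"
      then have q: "quad_square n Q" by (simp add: fib_def)
      show "F (F' Q) = Q"
      proof
        fix p show "F (F' Q) p = Q p"
          by (cases "p \<in> positions") (simp_all add: F_def F'_def gh inQ[OF q] outQ[OF q])
      qed
    qed
    show "F ` fib n P 0 w0 \<subseteq> fib n P a w"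
    proof
      fix Q' assume "Q' \<in> F ` fib n P 0 w0"
      then obtain Q where Q: "Q \<in> fib n P 0 w0" "Q' = F Q" by auto
      then have q: "quad_square n Q" "P Q" by (simp_all add: fib_def)
      have e: "\<forall>p\<in>positions. Q' p = g (Q p)" using Q by (simp add: F_def)
      have "quad_square n Q'"
        unfolding quad_square_def
      proof
        show "Q' \<in> positions \<rightarrow>\<^sub>E deck n" using Q inQ[OF q(1)] gd by (auto simp: F_def PiE_iff)
        show "inj_on Q' positions"
        proof (rule inj_onI)
          fix p p' assume pp: "p \<in> positions" "p' \<in> positions" "Q' p = Q' p'"
          then have "Q p = Q p'" using e inj inQ[OF q(1)] by (metis inj_onD)
          then show "p = p'" using q(1) pp unfolding quad_square_def by (meson inj_onD)
        qed
      qed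
      moreover have "P Q'" using A2[OF qg _ e] inQ[OF q(1)] q(2) by blast
      ultimately show "Q' \<in> fib n P a w" using Q gv by (simp add: fib_def F_def)
    qed
    show "F' ` fib n P a w \<subseteq> fib n P 0 w0"
    proof
      fix Q' assume "Q' \<in> F' ` fib n P a w"
      then obtain Q where Q: "Q \<in> fib n P a w" "Q' = F' Q" by auto
      then have q: "quad_square n Q" "P Q" by (simp_all add: fib_def)
      have e: "\<forall>p\<in>positions. Q p = g (Q' p)" using Q inQ[OF q(1)] by (simp add: F'_def gh)
      have d': "\<forall>p\<in>positions. Q' p \<in> deck n" using Q inQ[OF q(1)] hd by (simp add: F'_def)
      have "quad_square n Q'"
        unfolding quad_square_def
      proof
        show "Q' \<in> positions \<rightarrow>\<^sub>E deck n" using Q inQ[OF q(1)] hd by (auto simp: F'_def PiE_iff)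
        show "inj_on Q' positions"
        proof (rule inj_onI)
          fix p p' assume pp: "p \<in> positions" "p' \<in> positions" "Q' p = Q' p'"
          then have "Q p = Q p'" using e by metis
          then show "p = p'" using q(1) pp unfolding quad_square_def by (meson inj_onD)
        qed
      qed
      moreover have "P Q'" using A2[OF qg d' e] q(2) by blast
      moreover have "h a = 0" "h (xor a (w 0)) = 1" "h (xor a (w 1)) = 2" "h (xor a (w 2)) = 4" "h (xor a (w 3)) = 8"
        using hg dk gv by metis+
      ultimately show "Q' \<in> fib n P 0 w0" using Q by (simp add: fib_def F'_def)
    qed
  qed
  then show ?thesis by (rule bij_betw_same_card)
qed


lemma affine_g:
  assumes L: "bij_betw L (deck n) (deck n)" "\<forall>x y. L (xor x y) = xor (L x) (L y)" and a: "a \<in> deck n"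
  shows "bij_betw (\<lambda>z. xor a (L z)) (deck n) (deck n) \<and> quadiff n (\<lambda>z. xor a (L z)) \<and> L 0 = 0"
proof -
  have L0: "L 0 = 0" using L(2)[rule_format, of 0 0] by simp
  have injL: "inj_on L (deck n)" using L(1) by (rule bij_betw_imp_inj_on)
  have Ld: "L x \<in> deck n" if "x \<in> deck n" for x using L(1) that by (meson bij_betwE)
  have xd: "xor x y \<in> deck n" if "x \<in> deck n" "y \<in> deck n" for x y using that xor_lt by (simp add: deck_def)
  have "inj_on (\<lambda>z. xor a (L z)) (deck n)"
  proof (rule inj_onI)
    fix x y assume xy: "x \<in> deck n" "y \<in> deck n" "xor a (L x) = xor a (L y)"
    then have "L x = L y" by (metis xor_cancel1)
    then show "x = y" using injL xy by (meson inj_onD)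
  qed
  moreover have "(\<lambda>z. xor a (L z)) ` deck n \<subseteq> deck n" using a Ld xd by auto
  ultimately have b: "bij_betw (\<lambda>z. xor a (L z)) (deck n) (deck n)"
    by (simp add: bij_betw_def endo_inj_surj deck_def)
  have "quadiff n (\<lambda>z. xor a (L z))" unfolding quadiff_def is_quad_def
  proof (intro ballI)
    fix p q r s assume d: "p \<in> deck n" "q \<in> deck n" "r \<in> deck n" "s \<in> deck n"
    have e: "xor (xor (xor (xor a (L p)) (xor a (L q))) (xor a (L r))) (xor a (L s)) = L (xor (xor (xor p q) r) s)"
      by (simp add: L(2) xor.assoc xor.commute xor.left_commute)
    have td: "xor (xor (xor p q) r) s \<in> deck n" using d xd by simp
    have z0: "(0::nat) \<in> deck n" by (simp add: deck_def)
    have "L (xor (xor (xor p q) r) s) = 0 \<longleftrightarrow> xor (xor (xor p q) r) s = 0"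
    proof
      assume "L (xor (xor (xor p q) r) s) = 0"
      then have "L (xor (xor (xor p q) r) s) = L 0" using L0 by simp
      then show "xor (xor (xor p q) r) s = 0" using inj_onD[OF injL _ td z0] by simp
    qed (simp add: L0)
    then show "(xor (xor (xor (xor a (L p)) (xor a (L q))) (xor a (L r))) (xor a (L s)) = 0) =
       (xor (xor (xor p q) r) s = 0)" using e by simp
  qed
  with b L0 show ?thesis by simp
qed

lemma main_count:
  assumes n: "n \<ge> 4" and A1: "\<And>Q. P Q \<Longrightarrow> semimagic Q"
    and A2: "\<And>g Q Q'. quadiff n g \<Longrightarrow> \<forall>p\<in>positions. Q p \<in> deck n \<Longrightarrow> \<forall>p\<in>positions. Q' p = g (Q p) \<Longrightarrow> P Q' = P Q"
  shows "card {Q. quad_square n Q \<and> P Q} = 2^n * (2^n - 1) * (2^n - 2) * (2^n - 4) * (2^n - 8) *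
           card {Q. quad_square n Q \<and> P Q \<and> type_C Q}"
proof -
  define Fr where "Fr = {0..<(2::nat)^n} \<times> IT n 4"
  define A where "A = (\<lambda>(a,w). fib n P a w)"
  have finIT: "finite (IT n 4)" unfolding IT_def
    by (rule finite_subset[OF _ finite_PiE[of "{0..<4}" "\<lambda>_. {0..<2^n}"]]) auto
  have finFr: "finite Fr" using finIT by (simp add: Fr_def)
  have finA: "finite (A i)" for i
  proof -
    obtain a w where i: "i = (a,w)" by fastforce
    have "A i = fib n P a w" by (simp add: A_def i)
    also have "\<dots> \<subseteq> {Q. quad_square n Q}" by (rule subsetI) (simp add: fib_def)
    also have "\<dots> \<subseteq> positions \<rightarrow>\<^sub>E deck n" by (rule subsetI) (simp add: quad_square_def)
    finally have "A i \<subseteq> positions \<rightarrow>\<^sub>E deck n" .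
    moreover have "finite (positions \<rightarrow>\<^sub>E deck n)" by (rule finite_PiE) (simp_all add: positions_def deck_def)
    ultimately show ?thesis by (rule finite_subset)
  qed
  have S: "{Q. quad_square n Q \<and> P Q} = \<Union>(A ` Fr)"
  proof
    show "{Q. quad_square n Q \<and> P Q} \<subseteq> \<Union>(A ` Fr)"
    proof
      fix Q assume "Q \<in> {Q. quad_square n Q \<and> P Q}"
      then have q: "quad_square n Q" "P Q" by auto
      let ?w = "(\<lambda>i\<in>{0..<4}. xor (Q(0,0)) ([Q(0,1),Q(0,2),Q(1,0),Q(2,0)] ! i))"
      have qs: "Q \<in> positions \<rightarrow>\<^sub>E deck n" "inj_on Q positions" using q(1) by (simp_all add: quad_square_def)
      have "?w \<in> IT n 4" by (rule frame_IT[OF qs A1[OF q(2)]])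
      moreover have "Q(0,0) < 2^n" using q unfolding quad_square_def by (auto simp: PiE_iff deck_def)
      ultimately have mem: "(Q(0,0), ?w) \<in> Fr" unfolding Fr_def by simp
      have Aeq: "A (Q(0,0), ?w) = fib n P (Q(0,0)) ?w" by (simp add: A_def)
      have "Q \<in> fib n P (Q(0,0)) ?w" unfolding fib_def using q by simp
      then have "Q \<in> A (Q(0,0), ?w)" unfolding Aeq .
      with mem show "Q \<in> \<Union>(A ` Fr)" by (rule UN_I)
    qed
    show "\<Union>(A ` Fr) \<subseteq> {Q. quad_square n Q \<and> P Q}"
    proof (rule UN_least)
      fix i assume "i \<in> Fr"
      obtain a w where i: "i = (a,w)" by fastforce
      have "A i = fib n P a w" by (simp add: A_def i)
      also have "\<dots> \<subseteq> {Q. quad_square n Q \<and> P Q}" by (rule subsetI) (simp add: fib_def)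
      finally show "A i \<subseteq> {Q. quad_square n Q \<and> P Q}" .
    qed
  qed
  have disj: "\<forall>i\<in>Fr. \<forall>j\<in>Fr. i \<noteq> j \<longrightarrow> A i \<inter> A j = {}"
  proof (intro ballI impI)
    fix i j assume ij: "i \<in> Fr" "j \<in> Fr" "i \<noteq> j"
    obtain a w a' w' where ii: "i = (a,w)" "j = (a',w')" by fastforce
    show "A i \<inter> A j = {}"
    proof (rule ccontr)
      assume "A i \<inter> A j \<noteq> {}"
      then obtain Q where "Q \<in> A i" "Q \<in> A j" by blast
      then have e: "a = a'" "xor a (w 0) = xor a (w' 0)" "xor a (w 1) = xor a (w' 1)"
         "xor a (w 2) = xor a (w' 2)" "xor a (w 3) = xor a (w' 3)"
        by (auto simp: A_def fib_def ii)
      have "\<forall>k<4. w k = w' k" unfolding all_lt4 using e by (metis xor_cancel1)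
      moreover have "w \<in> extensional {0..<4}" "w' \<in> extensional {0..<4}"
        using ij ii by (auto simp: Fr_def IT_def PiE_iff)
      ultimately have "w = w'" by (intro extensionalityI) auto
      then show False using e ij ii by simp
    qed
  qed
  have cardS: "card {Q. quad_square n Q \<and> P Q} = (\<Sum>i\<in>Fr. card (A i))"
    unfolding S by (rule card_UN_disjoint[OF finFr _ disj]) (simp add: finA)
  have dk: "0 \<in> deck n" "1 \<in> deck n" "2 \<in> deck n" "4 \<in> deck n" "8 \<in> deck n"
  proof -
    have "(2::nat)^4 \<le> 2^n" using n by (rule power_increasing) simp
    then show "0 \<in> deck n" "1 \<in> deck n" "2 \<in> deck n" "4 \<in> deck n" "8 \<in> deck n"
      by (auto simp: deck_def)
  qed
  have eqc: "card (A i) = card (fib n P 0 w0)" if iF: "i \<in> Fr" for i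
  proof -
    obtain a w where i: "i = (a,w)" "a \<in> deck n" "w \<in> IT n 4" using iF by (auto simp: Fr_def deck_def)
    obtain L where L: "bij_betw L (deck n) (deck n)" "\<forall>x y. L (xor x y) = xor (L x) (L y)"
      "L 1 = w 0" "L 2 = w 1" "L 4 = w 2" "L 8 = w 3" using exists_L[OF i(3) n] by blast
    have g: "bij_betw (\<lambda>z. xor a (L z)) (deck n) (deck n)" "quadiff n (\<lambda>z. xor a (L z))" "L 0 = 0"
      using affine_g[OF L(1,2) i(2)] by auto
    have "card (fib n P 0 w0) = card (fib n P a w)"
      by (rule fib_transport[OF A2 g(1,2) dk]) (simp_all only: g(3) L(3-6) xor.comm_neutral)
    then show ?thesis unfolding i A_def by simp
  qed
  have "card {Q. quad_square n Q \<and> P Q} = card Fr * card (fib n P 0 w0)"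
    using cardS eqc by simp
  moreover have "card Fr = 2^n * ((2^n - 1) * (2^n - 2) * (2^n - 4) * (2^n - 8))"
  proof -
    have "{..<4::nat} = {0,1,2,3}" by auto
    then have "(\<Prod>i<4. (2::nat)^n - 2^i) = (2^n - 1) * (2^n - 2) * (2^n - 4) * (2^n - 8)" by simp
    then show ?thesis using card_IT[OF n] by (simp add: Fr_def card_cartesian_product)
  qed
  moreover have "fib n P 0 w0 = {Q. quad_square n Q \<and> P Q \<and> type_C Q}"
  proof (rule set_eqI, rule iffI)
    fix Q assume "Q \<in> fib n P 0 w0"
    then have q: "quad_square n Q" "P Q" "Q(0,0) = 0" "Q(0,1) = 1" "Q(0,2) = 2" "Q(1,0) = 4" "Q(2,0) = 8"
      by (simp_all add: fib_def)
    have sm: "semimagic Q" using A1 q(2) .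
    have "Q(0,3) = xor (xor (Q(0,0)) (Q(0,1))) (Q(0,2))" "Q(3,0) = xor (xor (Q(0,0)) (Q(1,0))) (Q(2,0))"
      using sm unfolding semimagic_def by (auto intro: quad_last)
    then have "Q(0,3) = 3" "Q(3,0) = 12" using q by simp_all
    then show "Q \<in> {Q. quad_square n Q \<and> P Q \<and> type_C Q}"
      using q unfolding type_C_def all_lt4 by simp
  next
    fix Q assume "Q \<in> {Q. quad_square n Q \<and> P Q \<and> type_C Q}"
    then show "Q \<in> fib n P 0 w0" unfolding type_C_def all_lt4 by (simp add: fib_def)
  qed
  ultimately show ?thesis by (simp add: mult.assoc)
qed

theorem mainTheorem1:
  fixes n :: nat
  assumes "n \<ge> 4"
  shows "(card {Q. quad_square n Q \<and> semimagic Q} =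
           2^n * (2^n - 1) * (2^n - 2) * (2^n - 4) * (2^n - 8) *
           card {Q. quad_square n Q \<and> semimagic Q \<and> type_C Q}) \<and>
         (card {Q. quad_square n Q \<and> magic Q} =
           2^n * (2^n - 1) * (2^n - 2) * (2^n - 4) * (2^n - 8) *
           card {Q. quad_square n Q \<and> magic Q \<and> type_C Q}) \<and>
         (card {Q. quad_square n Q \<and> strongly_magic Q} =
           2^n * (2^n - 1) * (2^n - 2) * (2^n - 4) * (2^n - 8) *
           card {Q. quad_square n Q \<and> strongly_magic Q \<and> type_C Q})"
proof (intro conjI)
  show "card {Q. quad_square n Q \<and> semimagic Q} =
           2^n * (2^n - 1) * (2^n - 2) * (2^n - 4) * (2^n - 8) *
           card {Q. quad_square n Q \<and> semimagic Q \<and> type_C Q}"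
    by (rule main_count[OF assms], assumption, rule inv_semimagic)
  show "card {Q. quad_square n Q \<and> magic Q} =
           2^n * (2^n - 1) * (2^n - 2) * (2^n - 4) * (2^n - 8) *
           card {Q. quad_square n Q \<and> magic Q \<and> type_C Q}"
    by (rule main_count[OF assms], simp add: magic_def, rule inv_magic)
  show "card {Q. quad_square n Q \<and> strongly_magic Q} =
           2^n * (2^n - 1) * (2^n - 2) * (2^n - 4) * (2^n - 8) *
           card {Q. quad_square n Q \<and> strongly_magic Q \<and> type_C Q}"
    by (rule main_count[OF assms], rule sm_semimagic, assumption, rule inv_strongly)
qed


end
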